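(* Let $n\ge 3$ and let $(\mathbf{r},\mathbf{d})$ be an arithmetical structure on the cycle $C_n$ with vertices $v_1,\ldots,v_n$ in cyclic order and $\mathbf{r}=(r_1,\ldots,r_n)$ (indices mod $n$). Then $|\mathcal{K}(C_n;\mathbf{r})|=\sum_{i=1}^n \frac{1}{r_ir_{i+1}}$, and this quantity is a positive integer $k\le n$ equal to the number of vertices of the cycle $C_k$ obtained by repeatedly smoothing (removing a degree-$2$ vertex $v_i$ with $r_i=r_{i-1}+r_{i+1}$ and joining its neighbors) until the Laplacian structure $\mathbf{r}=\mathbf{1}$ is reached.
   Context: The adjacency matrix $A$ of $C_n$ has $a_{i,j}=1$ iff $v_i,v_j$ are consecutive. An arithmetical structure is a pair $(\mathbf{r},\mathbf{d})$ with $\mathbf{d}\in\mathbb{Z}_{\ge0}^n$ and $\mathbf{r}\in\mathbb{Z}_{>0}^n$ having entries with gcd $1$ and $(\mathrm{diag}(\mathbf{d})-A)\mathbf{r}=\mathbf{0}$, i.e. $r_i\mid r_{i-1}+r_{i+1}$ for all $i$. $\mathcal{K}(C_n;\mathbf{r})$ is the torsion subgroup of $\mathbb{Z}^n/(\mathrm{diag}(\mathbf{d})-A)\mathbb{Z}^n$. Smoothing may produce $C_2$ (two vertices, two parallel edges) as an intermediate or final cycle. *)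

theory Defs
  imports Complex_Main
begin

text \<open>Vertices of the cycle C_n are 0,...,n-1 (v_{i+1} in the paper is vertex i);
  indices are taken mod n.\<close>

definition cyc_prev :: "nat \<Rightarrow> nat \<Rightarrow> nat" where
  "cyc_prev n i = (i + n - 1) mod n"

definition cyc_next :: "nat \<Rightarrow> nat \<Rightarrow> nat" where
  "cyc_next n i = (Suc i) mod n"

definition arith_struct :: "nat \<Rightarrow> (nat \<Rightarrow> nat) \<Rightarrow> (nat \<Rightarrow> nat) \<Rightarrow> bool" where
  "arith_struct n r d \<longleftrightarrow>
     (\<forall>i<n. 0 < r i) \<and> Gcd (r ` {..<n}) = 1 \<and>
     (\<forall>i<n. d i * r i = r (cyc_prev n i) + r (cyc_next n i))"

text \<open>Integer vectors in Z^n, represented as functions vanishing outside {0..<n}.\<close>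

definition int_vecs :: "nat \<Rightarrow> (nat \<Rightarrow> int) set" where
  "int_vecs n = {x. \<forall>i\<ge>n. x i = 0}"

definition cyc_mat_apply :: "nat \<Rightarrow> (nat \<Rightarrow> nat) \<Rightarrow> (nat \<Rightarrow> int) \<Rightarrow> (nat \<Rightarrow> int)" where
  "cyc_mat_apply n d x = (\<lambda>i. if i < n then int (d i) * x i - x (cyc_prev n i) - x (cyc_next n i) else 0)"

definition cyc_image :: "nat \<Rightarrow> (nat \<Rightarrow> nat) \<Rightarrow> (nat \<Rightarrow> int) set" where
  "cyc_image n d = cyc_mat_apply n d ` int_vecs n"

definition torsion_reps :: "nat \<Rightarrow> (nat \<Rightarrow> nat) \<Rightarrow> (nat \<Rightarrow> int) set" where
  "torsion_reps n d = {x \<in> int_vecs n. \<exists>m::int. 0 < m \<and> (\<lambda>i. m * x i) \<in> cyc_image n d}"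

text \<open>The torsion subgroup K(C_n; r), as the set of cosets of the image lattice
  that consist of torsion elements.\<close>

definition critical_group :: "nat \<Rightarrow> (nat \<Rightarrow> nat) \<Rightarrow> (nat \<Rightarrow> int) set set" where
  "critical_group n d = torsion_reps n d //
     {(x, y). x \<in> torsion_reps n d \<and> y \<in> torsion_reps n d \<and> (\<lambda>i. x i - y i) \<in> cyc_image n d}"

text \<open>One smoothing step on a cycle given by its cyclic list of r-values
  (lengths >= 2; length 2 is C_2 with two parallel edges, where both neighbours of a
  vertex are the other vertex): remove a vertex i with r_i = r_{i-1} + r_{i+1}.\<close>

definition smooth_step :: "nat list \<Rightarrow> nat list \<Rightarrow> bool" where
  "smooth_step xs ys \<longleftrightarrow> 2 \<le> length xs \<and>
     (\<exists>i<length xs. xs ! i = xs ! cyc_prev (length xs) i + xs ! cyc_next (length xs) i \<and>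
        ys = take i xs @ drop (Suc i) xs)"

end

theory Submission
  imports Defs
begin


lemma cyc_next_lt: "0 < n \<Longrightarrow> cyc_next n i < n"
  by (simp add: cyc_next_def)
lemma cyc_prev_lt: "0 < n \<Longrightarrow> cyc_prev n i < n"
  by (simp add: cyc_prev_def)

lemma next_prev: "i < n \<Longrightarrow> cyc_next n (cyc_prev n i) = i"
proof -
  assume "i < n"
  then have "cyc_next n (cyc_prev n i) = Suc (i + n - 1) mod n"
    by (simp add: cyc_next_def cyc_prev_def mod_Suc_eq)
  also have "Suc (i + n - 1) = i + n" using \<open>i<n\<close> by simp
  finally show ?thesis using \<open>i<n\<close> by simp
qed

lemma prev_next: "i < n \<Longrightarrow> cyc_prev n (cyc_next n i) = i"
proof -
  assume "i < n"
  then have "cyc_prev n (cyc_next n i) = (Suc i mod n + (n - 1)) mod n"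
    by (simp add: cyc_next_def cyc_prev_def)
  also have "\<dots> = (Suc i + (n - 1)) mod n" by (simp add: mod_add_left_eq)
  also have "Suc i + (n - 1) = i + n" using \<open>i<n\<close> by simp
  finally show ?thesis using \<open>i<n\<close> by simp
qed

lemma cyc_prev_pos: "0 < i \<Longrightarrow> i < n \<Longrightarrow> cyc_prev n i = i - 1"
proof -
  assume a: "0 < i" "i < n"
  have "i + n - 1 = (i - 1) + n" using a by simp
  hence "(i + n - 1) mod n = ((i - 1) + n) mod n" by (rule arg_cong)
  also have "\<dots> = i - 1"
  proof -
    have "i - 1 < n" using a by simp
    then show ?thesis by (simp only: mod_add_self2 mod_less)
  qed
  finally show ?thesis unfolding cyc_prev_def .
qed

lemma cyc_next_lt1: "Suc i < n \<Longrightarrow> cyc_next n i = Suc i"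
  by (simp add: cyc_next_def)

lemma bij_next: "0 < n \<Longrightarrow> bij_betw (cyc_next n) {..<n} {..<n}"
  by (rule bij_betw_byWitness[where f' = "cyc_prev n"])
     (auto simp: prev_next next_prev cyc_next_lt cyc_prev_lt)

lemma sum_next: "0 < n \<Longrightarrow> (\<Sum>i<n. f (cyc_next n i)) = (\<Sum>i<n. f i)"
  using sum.reindex_bij_betw[OF bij_next] by blast

lemma shift_next: "0 < m \<Longrightarrow> cyc_next m ((p + i) mod m) = (p + cyc_next m i) mod m"
  by (simp add: cyc_next_def mod_Suc_eq mod_add_right_eq)

lemma shift_prev: "0 < m \<Longrightarrow> cyc_prev m ((p + i) mod m) = (p + cyc_prev m i) mod m"
proof -
  assume m: "0 < m"
  have "cyc_prev m ((p + i) mod m) = ((p + i) mod m + (m - 1)) mod m"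
    using m by (simp add: cyc_prev_def)
  also have "\<dots> = (p + i + (m - 1)) mod m" by (simp add: mod_add_left_eq)
  also have "\<dots> = (p + (i + (m - 1)) mod m) mod m" by (simp add: mod_add_right_eq add.assoc)
  finally show ?thesis using m by (simp add: cyc_prev_def)
qed

lemma shift_surj: "0 < (m::nat) \<Longrightarrow> v < m \<Longrightarrow> (p + (v + m - p mod m) mod m) mod m = v"
proof -
  assume m: "0 < m" and v: "v < m"
  have "(p + (v + m - p mod m) mod m) mod m = (p + (v + m - p mod m)) mod m"
    by (simp only: mod_add_right_eq)
  also have "\<dots> = (p mod m + (v + m - p mod m)) mod m" by (simp add: mod_add_left_eq)
  also have "p mod m + (v + m - p mod m) = v + m" using m
    by (metis add.commute le_add_diff_inverse less_imp_le_nat mod_less_divisor trans_le_add1)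
  finally show ?thesis using v by simp
qed

lemma bij_shift: "0 < (m::nat) \<Longrightarrow> bij_betw (\<lambda>i. (p + i) mod m) {..<m} {..<m}"
proof -
  assume m: "0 < m"
  have sur: "(\<lambda>i. (p + i) mod m) ` {..<m} = {..<m}"
  proof
    show "(\<lambda>i. (p + i) mod m) ` {..<m} \<subseteq> {..<m}" using m by auto
    show "{..<m} \<subseteq> (\<lambda>i. (p + i) mod m) ` {..<m}"
    proof
      fix v assume "v \<in> {..<m}"
      then have "v = (p + (v + m - p mod m) mod m) mod m" using shift_surj[OF m] by simp
      moreover have "(v + m - p mod m) mod m \<in> {..<m}" using m by simp
      ultimately show "v \<in> (\<lambda>i. (p + i) mod m) ` {..<m}" by blast
    qed
  qed
  then have "inj_on (\<lambda>i. (p + i) mod m) {..<m}"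
    by (simp add: eq_card_imp_inj_on)
  with sur show ?thesis by (simp add: bij_betw_def)
qed

lemma sum_shift: "0 < (m::nat) \<Longrightarrow> (\<Sum>i<m. g ((p + i) mod m)) = (\<Sum>i<m. g i)"
  using sum.reindex_bij_betw[OF bij_shift] by blast

lemma sum_M:
  assumes "0 < n"
  shows "(\<Sum>i<n. w i * cyc_mat_apply n d x i) =
         (\<Sum>i<n. x i * (int (d i) * w i - w (cyc_prev n i) - w (cyc_next n i)))"
proof -
  have a: "(\<Sum>i<n. w i * x (cyc_prev n i)) = (\<Sum>i<n. w (cyc_next n i) * x i)"
  proof -
    have "(\<Sum>i<n. w (cyc_next n i) * x i) = (\<Sum>i<n. w (cyc_next n i) * x (cyc_prev n (cyc_next n i)))"
      by (rule sum.cong) (auto simp: prev_next)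
    also have "\<dots> = (\<Sum>i<n. w i * x (cyc_prev n i))"
      by (rule sum_next[OF assms, of "\<lambda>i. w i * x (cyc_prev n i)"])
    finally show ?thesis by simp
  qed
  have b: "(\<Sum>i<n. w i * x (cyc_next n i)) = (\<Sum>i<n. w (cyc_prev n i) * x i)"
  proof -
    have "(\<Sum>i<n. w (cyc_prev n i) * x i) = (\<Sum>i<n. w (cyc_prev n (cyc_next n i)) * x (cyc_next n i))"
      by (rule sum_next[OF assms, of "\<lambda>i. w (cyc_prev n i) * x i", symmetric])
    also have "\<dots> = (\<Sum>i<n. w i * x (cyc_next n i))"
      by (rule sum.cong) (auto simp: prev_next)
    finally show ?thesis by simp
  qed
  have "(\<Sum>i<n. w i * cyc_mat_apply n d x i) =
        (\<Sum>i<n. w i * int (d i) * x i) - (\<Sum>i<n. w i * x (cyc_prev n i)) - (\<Sum>i<n. w i * x (cyc_next n i))"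
    by (simp add: cyc_mat_apply_def sum_subtractf sum.distrib algebra_simps)
  also have "\<dots> = (\<Sum>i<n. x i * (int (d i) * w i - w (cyc_prev n i) - w (cyc_next n i)))"
    unfolding a b by (simp add: sum_subtractf sum.distrib algebra_simps)
  finally show ?thesis .
qed

lemma weighted_zero:
  assumes "0 < n" and "\<forall>i<n. int (d i) * w i = w (cyc_prev n i) + w (cyc_next n i)"
  shows "(\<Sum>i<n. w i * cyc_mat_apply n d x i) = 0"
  unfolding sum_M[OF assms(1)] using assms(2) by (simp add: sum.neutral)



fun Cs :: "(nat \<Rightarrow> nat) \<Rightarrow> nat \<Rightarrow> int" where
  "Cs D 0 = 0"
| "Cs D (Suc 0) = 1"
| "Cs D (Suc (Suc j)) = int (D (Suc j)) * Cs D (Suc j) - Cs D j"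

fun Ps :: "(nat \<Rightarrow> nat) \<Rightarrow> (nat \<Rightarrow> int) \<Rightarrow> nat \<Rightarrow> int" where
  "Ps D y 0 = 0"
| "Ps D y (Suc 0) = 0"
| "Ps D y (Suc (Suc j)) = int (D (Suc j)) * Ps D y (Suc j) - Ps D y j - y (Suc j)"

lemma periodic_mod:
  fixes n :: nat
  assumes "\<And>j. f (j + n) = f j"
  shows "f (j mod n) = f j"
proof -
  have "\<And>q. f (j mod n + q * n) = f (j mod n)"
  proof -
    fix q show "f (j mod n + q * n) = f (j mod n)"
    proof (induction q)
      case (Suc q)
      have "j mod n + Suc q * n = (j mod n + q * n) + n" by simp
      then show ?case using Suc assms by metis
    qed simp
  qed
  from this[of "j div n"] show ?thesis by (simp add: mod_div_mult_eq)
qed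

locale core =
  fixes n :: nat and r d :: "nat \<Rightarrow> nat"
  assumes n3: "3 \<le> n" and pos: "\<And>j. 0 < r j"
    and per_r: "\<And>j. r (j + n) = r j" and per_d: "\<And>j. d (j + n) = d j"
    and eq: "\<And>j. d (Suc j) * r (Suc j) = r j + r (Suc (Suc j))"
    and r0: "r 0 = 1"
begin

definition k :: int where "k = Cs d n"
definition phi :: "(nat \<Rightarrow> int) \<Rightarrow> int" where "phi y = (\<Sum>j<n. Cs d j * y j)"

lemma npos: "0 < n" using n3 by simp

lemma r_mod: "r (j mod n) = r j" by (rule periodic_mod) (rule per_r)

lemma eq_int: "int (d (Suc j)) * int (r (Suc j)) = int (r j) + int (r (Suc (Suc j)))"
  using eq[of j] by (metis of_nat_add of_nat_mult)

lemma W: "int (r j) * Cs d (Suc j) - int (r (Suc j)) * Cs d j = 1"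
proof (induction j)
  case 0 then show ?case using r0 by simp
next
  case (Suc j)
  have "int (r (Suc j)) * Cs d (Suc (Suc j)) - int (r (Suc (Suc j))) * Cs d (Suc j)
      = (int (d (Suc j)) * int (r (Suc j))) * Cs d (Suc j) - int (r (Suc j)) * Cs d j
          - int (r (Suc (Suc j))) * Cs d (Suc j)"
    by (simp add: algebra_simps)
  also have "\<dots> = int (r j) * Cs d (Suc j) - int (r (Suc j)) * Cs d j"
    unfolding eq_int by (simp add: algebra_simps)
  finally show ?case using Suc by simp
qed

lemma Csum: "real_of_int (Cs d j) / real (r j) = (\<Sum>i<j. 1 / (real (r i) * real (r (Suc i))))"
proof (induction j)
  case 0 then show ?case by simp
next
  case (Suc j)
  have w0: "real_of_int (int (r j) * Cs d (Suc j) - int (r (Suc j)) * Cs d j) = 1"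
    using W[of j] by (simp only: of_int_1)
  have w: "real (r j) * real_of_int (Cs d (Suc j)) = real (r (Suc j)) * real_of_int (Cs d j) + 1"
    using w0 by simp
  have pj: "real (r j) > 0" "real (r (Suc j)) > 0" using pos by auto
  have "real_of_int (Cs d j) / real (r j) + 1 / (real (r j) * real (r (Suc j)))
      = (real (r (Suc j)) * real_of_int (Cs d j) + 1) / (real (r j) * real (r (Suc j)))"
    using pj by (simp add: field_simps)
  also have "\<dots> = (real (r j) * real_of_int (Cs d (Suc j))) / (real (r j) * real (r (Suc j)))"
    by (simp only: w)
  also have "\<dots> = real_of_int (Cs d (Suc j)) / real (r (Suc j))"
    using pj by simp
  finally have "real_of_int (Cs d (Suc j)) / real (r (Suc j))
      = real_of_int (Cs d j) / real (r j) + 1 / (real (r j) * real (r (Suc j)))" by simp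
  then show ?case using Suc by simp
qed

lemma k_real: "real_of_int k = (\<Sum>i<n. 1 / (real (r i) * real (r (cyc_next n i))))"
proof -
  have rn: "r n = 1" using per_r[of 0] r0 by simp
  have "real_of_int k = (\<Sum>i<n. 1 / (real (r i) * real (r (Suc i))))"
    using Csum[of n] rn by (simp add: k_def)
  also have "\<dots> = (\<Sum>i<n. 1 / (real (r i) * real (r (cyc_next n i))))"
    by (simp add: cyc_next_def r_mod)
  finally show ?thesis .
qed

lemma k_pos: "0 < k"
proof -
  have "0 < (\<Sum>i<n. 1 / (real (r i) * real (r (cyc_next n i))))"
    using npos pos by (intro sum_pos) auto
  then show ?thesis using k_real by simp
qed

lemma k_le: "k \<le> int n"
proof -
  have "(\<Sum>i<n. 1 / (real (r i) * real (r (cyc_next n i)))) \<le> (\<Sum>i<n. 1)"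
  proof (rule sum_mono)
    fix i
    have "0 < r i * r (cyc_next n i)" using pos by simp
    then have "1 \<le> real (r i * r (cyc_next n i))" by linarith
    then have "1 \<le> real (r i) * real (r (cyc_next n i))" by (simp only: of_nat_mult)
    then show "1 / (real (r i) * real (r (cyc_next n i))) \<le> 1" by (simp add: divide_le_eq)
  qed
  then have "real_of_int k \<le> real_of_int (int n)" using k_real by simp
  then show ?thesis by (simp only: of_int_le_iff)
qed

lemma Cn1: "Cs d (n - 1) = int (r (n - 1)) * k - 1"
proof -
  have "Suc (n - 1) = n" using npos by simp
  then have "int (r (n - 1)) * Cs d n - int (r n) * Cs d (n - 1) = 1" using W[of "n - 1"] by simp
  moreover have "r n = 1" using per_r[of 0] r0 by simp
  ultimately show ?thesis by (simp add: k_def)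
qed

lemma Crec: "1 \<le> j \<Longrightarrow> Cs d (Suc j) = int (d j) * Cs d j - Cs d (j - 1)"
  by (cases j) auto

lemma cyc_eq: "i < n \<Longrightarrow> int (d i) * int (r i) = int (r (cyc_prev n i)) + int (r (cyc_next n i))"
proof (cases i)
  case 0
  assume "i < n"
  have p: "cyc_prev n 0 = n - 1" using npos by (simp add: cyc_prev_def)
  have nx: "cyc_next n 0 = 1" using n3 by (simp add: cyc_next_def)
  have "Suc (n - 1) = n" using npos by simp
  then have "int (d n) * int (r n) = int (r (n - 1)) + int (r (Suc n))"
    using eq_int[of "n - 1"] by simp
  moreover have "d n = d 0" "r n = r 0" "r (Suc n) = r 1"
    using per_d[of 0] per_r[of 0] per_r[of 1] by simp_all
  ultimately show ?thesis using 0 p nx by simp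
next
  case (Suc m)
  assume "i < n"
  have p: "cyc_prev n i = m" using \<open>i < n\<close> Suc cyc_prev_pos[of i n] by simp
  have nx: "r (cyc_next n i) = r (Suc i)" by (simp add: cyc_next_def r_mod)
  show ?thesis using eq_int[of m] Suc p nx by simp
qed

lemma bracket:
  assumes "i < n"
  shows "k dvd (int (d i) * Cs d i - Cs d (cyc_prev n i) - Cs d (cyc_next n i))"
proof (cases "i = 0")
  case True
  have p: "cyc_prev n 0 = n - 1" using npos by (simp add: cyc_prev_def)
  have nx: "cyc_next n 0 = 1" using n3 by (simp add: cyc_next_def)
  have "int (d i) * Cs d i - Cs d (cyc_prev n i) - Cs d (cyc_next n i) = - (int (r (n - 1)) * k)"
    using True p nx Cn1 by simp
  then show ?thesis by simp
next
  case False
  have p: "cyc_prev n i = i - 1" using assms False cyc_prev_pos[of i n] by simp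
  have rec: "int (d i) * Cs d i - Cs d (i - 1) = Cs d (Suc i)" using Crec[of i] False by simp
  show ?thesis
  proof (cases "Suc i < n")
    case True
    then have "cyc_next n i = Suc i" by (simp add: cyc_next_def)
    then show ?thesis using p rec by simp
  next
    case False
    then have "Suc i = n" using assms by simp
    then have "cyc_next n i = 0" by (simp add: cyc_next_def)
    then show ?thesis using p rec \<open>Suc i = n\<close> by (simp add: k_def)
  qed
qed

lemma kill: "k dvd phi (cyc_mat_apply n d x)"
proof -
  have "phi (cyc_mat_apply n d x) =
    (\<Sum>i<n. x i * (int (d i) * Cs d i - Cs d (cyc_prev n i) - Cs d (cyc_next n i)))"
    unfolding phi_def by (rule sum_M[OF npos])
  also have "k dvd \<dots>"
    by (rule dvd_sum) (use bracket in auto)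
  finally show ?thesis .
qed

lemma Gid: "Cs d j * Ps d y (Suc j) - Ps d y j * Cs d (Suc j) = - (\<Sum>i<Suc j. Cs d i * y i)"
proof (induction j)
  case 0 then show ?case by simp
next
  case (Suc j)
  have "Cs d (Suc j) * Ps d y (Suc (Suc j)) - Ps d y (Suc j) * Cs d (Suc (Suc j))
      = (Cs d j * Ps d y (Suc j) - Ps d y j * Cs d (Suc j)) - Cs d (Suc j) * y (Suc j)"
    by (simp add: algebra_simps)
  then show ?case using Suc by simp
qed

lemma solve:
  assumes sr: "(\<Sum>j<n. int (r j) * y j) = 0" and kd: "k dvd phi y"
  shows "\<exists>x\<in>int_vecs n. \<forall>j<n. cyc_mat_apply n d x j = y j"
proof -
  have sn: "Suc (n - 1) = n" using npos by simp
  have "Cs d (n - 1) * Ps d y n - Ps d y (n - 1) * Cs d n = - phi y"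
    using Gid[of "n - 1"] sn by (simp add: phi_def)
  then have "(int (r (n - 1)) * k - 1) * Ps d y n - Ps d y (n - 1) * k = - phi y"
    by (simp only: Cn1 k_def[symmetric])
  then have "Ps d y n = phi y + k * (int (r (n - 1)) * Ps d y n - Ps d y (n - 1))"
    by (simp add: algebra_simps)
  then have kP: "k dvd Ps d y n" using kd by (metis dvd_add dvd_triv_left)
  define t where "t = - (Ps d y n div k)"
  define X where "X j = t * Cs d j + Ps d y j" for j
  have Xrec: "X (Suc (Suc j)) = int (d (Suc j)) * X (Suc j) - X j - y (Suc j)" for j
    by (simp add: X_def algebra_simps)
  have X0: "X 0 = 0" by (simp add: X_def)
  have Xn: "X n = 0" using kP by (simp add: X_def t_def k_def[symmetric])
  define x where "x j = (if j < n then X j else 0)" for j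
  have xin: "x \<in> int_vecs n" by (simp add: int_vecs_def x_def)
  have good: "cyc_mat_apply n d x j = y j" if "1 \<le> j" "j < n" for j
  proof -
    have p: "cyc_prev n j = j - 1" using that cyc_prev_pos[of j n] by simp
    have rec: "X (Suc j) = int (d j) * X j - X (j - 1) - y j"
      using Xrec[of "j - 1"] that by (simp add: Suc_diff_Suc)
    have nx: "x (cyc_next n j) = X (Suc j)"
    proof (cases "Suc j < n")
      case True then show ?thesis by (simp add: cyc_next_def x_def)
    next
      case False then have "Suc j = n" using that by simp
      then show ?thesis using X0 Xn npos by (simp add: cyc_next_def x_def)
    qed
    have "j - 1 < n" using that by simp
    then show ?thesis using that p nx rec by (simp add: cyc_mat_apply_def x_def)
  qed
  have wz: "(\<Sum>i<n. int (r i) * cyc_mat_apply n d x i) = 0"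
    by (rule weighted_zero[OF npos]) (use cyc_eq in simp)
  have "(\<Sum>i<n. int (r i) * (cyc_mat_apply n d x i - y i)) = 0"
    using wz sr by (simp add: sum_subtractf right_diff_distrib)
  moreover have "(\<Sum>i<n. int (r i) * (cyc_mat_apply n d x i - y i))
      = (\<Sum>i<n. if i = 0 then cyc_mat_apply n d x 0 - y 0 else 0)"
    by (rule sum.cong) (use good r0 in auto)
  moreover have "(\<Sum>i<n. if i = 0 then cyc_mat_apply n d x 0 - y 0 else 0) = cyc_mat_apply n d x 0 - y 0"
    using npos by (simp add: sum.delta)
  ultimately have "cyc_mat_apply n d x 0 = y 0" by simp
  then have "\<forall>j<n. cyc_mat_apply n d x j = y j" using good
    by (metis less_one not_less)
  with xin show ?thesis by blast
qed

definition e1 :: "nat \<Rightarrow> int" where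
  "e1 j = (if j = 1 then 1 else 0) - (if j = 0 then int (r 1) else 0)"

lemma e1_sum: "(\<Sum>j<n. int (r j) * e1 j) = 0"
proof -
  have "(\<Sum>j<n. int (r j) * e1 j) = (\<Sum>j<n. (if j = 1 then int (r 1) else 0) - (if j = 0 then int (r 1) else 0))"
    by (rule sum.cong) (auto simp: e1_def r0)
  also have "\<dots> = 0" using n3 by (simp add: sum_subtractf sum.delta)
  finally show ?thesis .
qed

lemma e1_phi: "phi e1 = 1"
proof -
  have "phi e1 = (\<Sum>j<n. (if j = 1 then 1 else 0) - (if j = 0 then Cs d 0 * int (r 1) else 0))"
    unfolding phi_def by (rule sum.cong) (auto simp: e1_def)
  also have "\<dots> = 1" using n3 by (simp add: sum_subtractf sum.delta)
  finally show ?thesis .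
qed

end


definition Sl :: "nat list \<Rightarrow> real" where
  "Sl xs = (\<Sum>i<length xs. 1 / (real (xs ! i) * real (xs ! cyc_next (length xs) i)))"

definition valid_l :: "nat list \<Rightarrow> bool" where
  "valid_l xs \<longleftrightarrow> (\<forall>i<length xs. 0 < xs ! i \<and>
      xs ! i dvd xs ! cyc_prev (length xs) i + xs ! cyc_next (length xs) i) \<and> Gcd (set xs) = 1"

lemma Sl_rot: "Sl (rotate s xs) = Sl xs"
proof (cases "xs = []")
  case True then show ?thesis by simp
next
  case False
  define m where "m = length xs"
  have m: "0 < m" using False by (simp add: m_def)
  define g where "g v = 1 / (real (xs ! v) * real (xs ! cyc_next m v))" for v
  have "Sl (rotate s xs) = (\<Sum>i<m. g ((s + i) mod m))"
    unfolding Sl_def g_def m_def[symmetric]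
  proof (rule sum.cong)
    fix i assume "i \<in> {..<m}"
    then have i: "i < m" by simp
    have "rotate s xs ! cyc_next m i = xs ! ((s + cyc_next m i) mod m)"
      using nth_rotate[of "cyc_next m i" xs s] cyc_next_lt[OF m] by (simp add: m_def)
    also have "\<dots> = xs ! cyc_next m ((s + i) mod m)" using shift_next[OF m] by simp
    finally show "1 / (real (rotate s xs ! i) * real (rotate s xs ! cyc_next (length (rotate s xs)) i)) =
        1 / (real (xs ! ((s + i) mod m)) * real (xs ! cyc_next m ((s + i) mod m)))"
      using nth_rotate[of i xs s] i by (simp add: m_def)
  qed (simp_all add: m_def)
  also have "\<dots> = (\<Sum>i<m. g i)" by (rule sum_shift[OF m])
  also have "\<dots> = Sl xs" by (simp add: Sl_def g_def m_def)
  finally show ?thesis .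
qed

lemma valid_rot: assumes v: "valid_l xs" shows "valid_l (rotate s xs)"
proof (cases "xs = []")
  case True then show ?thesis using v by simp
next
  case False
  define m where "m = length xs"
  have m: "0 < m" using False by (simp add: m_def)
  have "0 < rotate s xs ! i \<and> rotate s xs ! i dvd rotate s xs ! cyc_prev m i + rotate s xs ! cyc_next m i"
    if i: "i < m" for i
  proof -
    have a: "rotate s xs ! i = xs ! ((s + i) mod m)" using nth_rotate[of i xs s] i by (simp add: m_def)
    have b: "rotate s xs ! cyc_next m i = xs ! cyc_next m ((s + i) mod m)"
      using nth_rotate[of "cyc_next m i" xs s] cyc_next_lt[OF m] shift_next[OF m] by (simp add: m_def)
    have c: "rotate s xs ! cyc_prev m i = xs ! cyc_prev m ((s + i) mod m)"
      using nth_rotate[of "cyc_prev m i" xs s] cyc_prev_lt[OF m] shift_prev[OF m] by (simp add: m_def)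
    have "(s + i) mod m < m" using m by simp
    then show ?thesis using v a b c by (simp add: valid_l_def m_def)
  qed
  then show ?thesis using v by (simp add: valid_l_def m_def)
qed

lemma rotate_back: "ys \<noteq> [] \<Longrightarrow> rotate (length ys - i mod length ys) (rotate i ys) = ys"
proof -
  assume "ys \<noteq> []"
  then have l: "0 < length ys" by simp
  have "(length ys - i mod length ys + i) mod length ys = 0"
  proof -
    have a: "i mod length ys < length ys" using l by simp
    have "length ys - i mod length ys + i = length ys - i mod length ys + (i mod length ys + length ys * (i div length ys))"
      by (simp only: mod_mult_div_eq)
    also have "\<dots> = length ys + length ys * (i div length ys)" using a by linarith
    finally have "length ys - i mod length ys + i = length ys + length ys * (i div length ys)" .
    then show ?thesis by simp
  qed
  then show ?thesis by (simp add: rotate_rotate)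
qed

lemma rotdel:
  assumes "i < length xs"
  shows "rotate (Suc i) xs = rotate i (take i xs @ drop (Suc i) xs) @ [xs ! i]"
proof (cases "Suc i < length xs")
  case True
  define ys where "ys = take i xs @ drop (Suc i) xs"
  have ly: "length ys = length xs - 1" using assms by (simp add: ys_def)
  have "rotate i ys = drop i ys @ take i ys"
    using True ly by (simp add: rotate_drop_take)
  also have "drop i ys = drop (Suc i) xs" using assms by (simp add: ys_def)
  also have "take i ys = take i xs" using assms by (simp add: ys_def)
  finally have "rotate i ys = drop (Suc i) xs @ take i xs" .
  moreover have "rotate (Suc i) xs = drop (Suc i) xs @ take (Suc i) xs"
    using True by (simp add: rotate_drop_take)
  moreover have "take (Suc i) xs = take i xs @ [xs ! i]" using assms by (simp add: take_Suc_conv_app_nth)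
  ultimately show ?thesis by (simp add: ys_def)
next
  case False
  then have si: "Suc i = length xs" using assms by simp
  have "take i xs @ drop (Suc i) xs = take i xs" using si by simp
  moreover have "rotate i (take i xs) = take i xs" using si by simp
  moreover have "rotate (Suc i) xs = xs" using si by simp
  moreover have "xs = take i xs @ [xs ! i]" using si
    by (metis assms drop_all order_refl take_Suc_conv_app_nth take_all)
  ultimately show ?thesis by simp
qed

lemma frac_id: "0 < (a::real) \<Longrightarrow> 0 < b \<Longrightarrow> 1 / (a * (a + b)) + 1 / ((a + b) * b) = 1 / (a * b)"
proof -
  assume "0 < a" "0 < b"
  then have "a + b > 0" by simp
  then show ?thesis using \<open>0 < a\<close> \<open>0 < b\<close>
    by (simp add: divide_simps)
qed

lemma dvd_cancel_mid: "(a::nat) dvd x + (a + y) \<Longrightarrow> a dvd x + y"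
  by (metis add.left_commute dvd_add_right_iff dvd_refl)

lemma cyc_prev0: "0 < m \<Longrightarrow> cyc_prev m 0 = m - 1"
  by (simp add: cyc_prev_def)
lemma cyc_next_last: "0 < m \<Longrightarrow> cyc_next m (m - 1) = 0"
  by (simp add: cyc_next_def)

lemma Sl_snoc:
  assumes ne: "zs \<noteq> []" and pz: "\<forall>z\<in>set zs. 0 < z"
    and c: "c = zs ! (length zs - 1) + zs ! 0"
  shows "Sl (zs @ [c]) = Sl zs"
proof -
  define q where "q = length zs - 1"
  have lz: "length zs = Suc q" using ne by (simp add: q_def)
  define g where "g a b = 1 / (real a * real b)" for a b
  have inner: "(\<Sum>j<q. g ((zs @ [c]) ! j) ((zs @ [c]) ! cyc_next (Suc (Suc q)) j))
      = (\<Sum>j<q. g (zs ! j) (zs ! cyc_next (Suc q) j))"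
  proof (rule sum.cong)
    fix j assume "j \<in> {..<q}"
    then have j: "j < q" by simp
    then have "cyc_next (Suc (Suc q)) j = Suc j" "cyc_next (Suc q) j = Suc j"
      by (simp_all add: cyc_next_def)
    then show "g ((zs @ [c]) ! j) ((zs @ [c]) ! cyc_next (Suc (Suc q)) j) = g (zs ! j) (zs ! cyc_next (Suc q) j)"
      using j lz by (simp add: nth_append)
  qed simp
  have nq1: "cyc_next (Suc (Suc q)) q = Suc q" by (simp add: cyc_next_def)
  have nq2: "cyc_next (Suc (Suc q)) (Suc q) = 0" by (simp add: cyc_next_def)
  have "Sl (zs @ [c]) = (\<Sum>j<q. g (zs ! j) (zs ! cyc_next (Suc q) j)) + g (zs ! q) c + g c (zs ! 0)"
  proof -
    have "Sl (zs @ [c]) = (\<Sum>j<Suc (Suc q). g ((zs @ [c]) ! j) ((zs @ [c]) ! cyc_next (Suc (Suc q)) j))"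
      by (simp add: Sl_def g_def lz)
    also have "\<dots> = (\<Sum>j<q. g ((zs @ [c]) ! j) ((zs @ [c]) ! cyc_next (Suc (Suc q)) j))
        + g ((zs @ [c]) ! q) ((zs @ [c]) ! cyc_next (Suc (Suc q)) q)
        + g ((zs @ [c]) ! Suc q) ((zs @ [c]) ! cyc_next (Suc (Suc q)) (Suc q))"
      by simp
    also have "\<dots> = (\<Sum>j<q. g (zs ! j) (zs ! cyc_next (Suc q) j)) + g (zs ! q) c + g c (zs ! 0)"
      by (simp only: inner nq1 nq2) (simp add: nth_append lz)
    finally show ?thesis .
  qed
  moreover have "Sl zs = (\<Sum>j<q. g (zs ! j) (zs ! cyc_next (Suc q) j)) + g (zs ! q) (zs ! 0)"
  proof -
    have "Sl zs = (\<Sum>j<Suc q. g (zs ! j) (zs ! cyc_next (Suc q) j))"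
      by (simp add: Sl_def g_def lz)
    also have "\<dots> = (\<Sum>j<q. g (zs ! j) (zs ! cyc_next (Suc q) j)) + g (zs ! q) (zs ! cyc_next (Suc q) q)"
      by simp
    also have "cyc_next (Suc q) q = 0" by (simp add: cyc_next_def)
    finally show ?thesis .
  qed
  moreover have "g (zs ! q) c + g c (zs ! 0) = g (zs ! q) (zs ! 0)"
  proof -
    have "0 < zs ! q" "0 < zs ! 0" using pz lz by (auto intro!: bspec[OF pz] nth_mem)
    then show ?thesis using c frac_id[of "real (zs ! q)" "real (zs ! 0)"] by (simp add: g_def q_def)
  qed
  ultimately show ?thesis by simp
qed

lemma valid_snoc:
  assumes ne: "zs \<noteq> []" and v: "valid_l (zs @ [c])"
    and c: "c = zs ! (length zs - 1) + zs ! 0"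
  shows "valid_l zs"
proof -
  define q where "q = length zs - 1"
  have lz: "length zs = Suc q" using ne by (simp add: q_def)
  define u where "u = zs @ [c]"
  have lu: "length u = Suc (Suc q)" by (simp add: u_def lz)
  have uz: "j < Suc q \<Longrightarrow> u ! j = zs ! j" for j by (simp add: u_def nth_append lz)
  have uc: "u ! Suc q = c" by (simp add: u_def nth_append lz)
  have vu: "\<And>j. j < Suc (Suc q) \<Longrightarrow> 0 < u ! j \<and> u ! j dvd u ! cyc_prev (Suc (Suc q)) j + u ! cyc_next (Suc (Suc q)) j"
    using v by (simp add: valid_l_def u_def[symmetric] lu)
  have cond: "0 < zs ! j \<and> zs ! j dvd zs ! cyc_prev (Suc q) j + zs ! cyc_next (Suc q) j" if j: "j < Suc q" for j
  proof -
    have posj: "0 < zs ! j" using vu[of j] j uz[OF j] by simp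
    consider "q = 0" | "0 < q" "j = 0" | "0 < q" "j = q" | "0 < j" "j < q" using j by linarith
    then show ?thesis
    proof cases
      case 1
      then have "j = 0" using j by simp
      then show ?thesis using posj 1 by (simp add: cyc_prev_def cyc_next_def)
    next
      case 2
      have "u ! 0 dvd u ! Suc q + u ! 1" using vu[of 0] 2 by (simp add: cyc_prev_def cyc_next_def)
      then have "zs ! 0 dvd zs ! q + zs ! 0 + zs ! 1" using uz[of 0] uz[of 1] uc c 2 by (simp add: q_def)
      then have "zs ! 0 dvd zs ! q + zs ! 1" by (simp add: dvd_add_left_iff add.commute add.left_commute)
      moreover have "cyc_prev (Suc q) 0 = q" "cyc_next (Suc q) 0 = 1" using 2 by (simp_all add: cyc_prev_def cyc_next_def)
      ultimately show ?thesis using posj 2 by simp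
    next
      case 3
      have pq: "cyc_prev (Suc (Suc q)) q = q - 1" "cyc_next (Suc (Suc q)) q = Suc q"
        using 3 cyc_prev_pos[of q "Suc (Suc q)"] by (simp_all add: cyc_next_def)
      have "u ! q dvd u ! (q - 1) + u ! Suc q" using vu[of q] pq by simp
      then have "zs ! q dvd zs ! (q - 1) + (zs ! q + zs ! 0)" using uz[of q] uz[of "q - 1"] uc c 3 by (simp add: q_def)
      then have "zs ! q dvd zs ! (q - 1) + zs ! 0" by (rule dvd_cancel_mid)
      moreover have "cyc_prev (Suc q) q = q - 1" "cyc_next (Suc q) q = 0"
        using 3 cyc_prev_pos[of q "Suc q"] by (simp_all add: cyc_next_def)
      ultimately show ?thesis using posj 3 by simp
    next
      case 4
      have pq: "cyc_prev (Suc (Suc q)) j = j - 1" "cyc_next (Suc (Suc q)) j = Suc j"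
        "cyc_prev (Suc q) j = j - 1" "cyc_next (Suc q) j = Suc j"
        using 4 cyc_prev_pos[of j "Suc (Suc q)"] cyc_prev_pos[of j "Suc q"] by (simp_all add: cyc_next_def)
      have "u ! j dvd u ! (j - 1) + u ! Suc j" using vu[of j] pq 4 by simp
      then show ?thesis using uz[of j] uz[of "j - 1"] uz[of "Suc j"] 4 pq posj by simp
    qed
  qed
  have g: "Gcd (set zs) = 1"
  proof -
    have "Gcd (set zs) dvd Gcd (set u)"
    proof (rule Gcd_greatest)
      fix b assume "b \<in> set u"
      then have "b \<in> set zs \<or> b = c" by (auto simp: u_def)
      moreover have "zs ! q \<in> set zs" "zs ! 0 \<in> set zs" using lz by simp_all
      ultimately show "Gcd (set zs) dvd b" using c
        by (metis Gcd_dvd dvd_add q_def)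
    qed
    moreover have "Gcd (set u) = 1" using v by (simp add: valid_l_def u_def)
    ultimately show ?thesis by simp
  qed
  show ?thesis using cond g by (simp add: valid_l_def lz)
qed



lemma step_decomp:
  assumes "smooth_step xs ys"
  obtains i zs where "i < length xs" "2 \<le> length xs" "ys = take i xs @ drop (Suc i) xs"
    "zs = rotate i ys" "rotate (Suc i) xs = zs @ [xs ! i]" "zs \<noteq> []"
    "xs ! i = zs ! (length zs - 1) + zs ! 0"
proof -
  from assms obtain i where i: "i < length xs" and l2: "2 \<le> length xs"
    and c: "xs ! i = xs ! cyc_prev (length xs) i + xs ! cyc_next (length xs) i"
    and ys: "ys = take i xs @ drop (Suc i) xs"
    unfolding smooth_step_def by blast
  define m where "m = length xs"
  define zs where "zs = rotate i ys"
  have rot: "rotate (Suc i) xs = zs @ [xs ! i]" using rotdel[OF i] by (simp add: zs_def ys)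
  have lz: "length zs = m - 1" using i by (simp add: zs_def ys m_def)
  have ne: "zs \<noteq> []" using lz l2 by (auto simp: m_def)
  have nth: "j < m \<Longrightarrow> (zs @ [xs ! i]) ! j = xs ! ((Suc i + j) mod m)" for j
    using nth_rotate[of j xs "Suc i"] rot by (simp add: m_def)
  have xne: "xs \<noteq> []" using l2 by auto
  have h0: "zs ! 0 = xs ! cyc_next m i"
    using nth[of 0] ne l2 xne by (simp add: nth_append cyc_next_def m_def)
  have ar: "(Suc i + (m - 2)) = i + m - 1" using l2 by (simp add: m_def)
  have e: "length zs - 1 = m - 2" using lz by simp
  have lt: "m - 2 < length zs" using lz l2 by (simp add: m_def)
  have e1: "(zs @ [xs ! i]) ! (m - 2) = zs ! (m - 2)" using lt by (simp only: nth_append if_True)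
  have e2: "(zs @ [xs ! i]) ! (m - 2) = xs ! ((Suc i + (m - 2)) mod m)" using nth[of "m - 2"] l2 by (simp add: m_def)
  have h1: "zs ! (length zs - 1) = xs ! cyc_prev m i"
    unfolding e cyc_prev_def using e1 e2 ar by metis
  show ?thesis
    using that[OF i l2 ys zs_def rot ne] c h0 h1 by (simp add: m_def add.commute)
qed

lemma step_props:
  assumes st: "smooth_step xs ys" and p: "\<forall>x\<in>set xs. 0 < x"
  shows "Sl ys = Sl xs \<and> set ys \<subseteq> set xs \<and> length ys = length xs - 1 \<and> 2 \<le> length xs"
proof -
  obtain i zs where i: "i < length xs" "2 \<le> length xs" "ys = take i xs @ drop (Suc i) xs"
    "zs = rotate i ys" "rotate (Suc i) xs = zs @ [xs ! i]" "zs \<noteq> []"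
    "xs ! i = zs ! (length zs - 1) + zs ! 0"
    using step_decomp[OF st] by blast
  have sub: "set ys \<subseteq> set xs" using i(3) by (auto dest: in_set_takeD in_set_dropD)
  have pz: "\<forall>z\<in>set zs. 0 < z" using sub p i(4) by auto
  have "Sl ys = Sl zs" using i(4) Sl_rot by simp
  also have "\<dots> = Sl (zs @ [xs ! i])" using Sl_snoc[OF i(6) pz i(7)] by simp
  also have "\<dots> = Sl xs" using i(5) Sl_rot[of "Suc i" xs] by simp
  finally show ?thesis using sub i by simp
qed

lemma step_valid:
  assumes st: "smooth_step xs ys" and v: "valid_l xs"
  shows "valid_l ys"
proof -
  obtain i zs where i: "i < length xs" "2 \<le> length xs" "ys = take i xs @ drop (Suc i) xs"
    "zs = rotate i ys" "rotate (Suc i) xs = zs @ [xs ! i]" "zs \<noteq> []"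
    "xs ! i = zs ! (length zs - 1) + zs ! 0"
    using step_decomp[OF st] by blast
  have "valid_l (zs @ [xs ! i])" using valid_rot[OF v, of "Suc i"] i(5) by simp
  then have vz: "valid_l zs" using valid_snoc[OF i(6)] i(7) by simp
  have ne: "ys \<noteq> []" using i(4) i(6) by auto
  have "ys = rotate (length ys - i mod length ys) zs" using rotate_back[OF ne] i(4) by simp
  then show ?thesis using valid_rot[OF vz] by metis
qed

lemma star_props:
  assumes "smooth_step\<^sup>*\<^sup>* xs ys" and "\<forall>x\<in>set xs. 0 < x"
  shows "Sl ys = Sl xs \<and> set ys \<subseteq> set xs \<and> (1 \<le> length xs \<longrightarrow> 1 \<le> length ys)"
  using assms(1)
proof (induction rule: rtranclp_induct)
  case base then show ?case by simp
next
  case (step y z)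
  have "\<forall>x\<in>set y. 0 < x" using step.IH assms(2) by blast
  then have "Sl z = Sl y \<and> set z \<subseteq> set y \<and> length z = length y - 1 \<and> 2 \<le> length y"
    using step_props[OF step.hyps(2)] by blast
  then show ?case using step.IH by auto
qed

lemma all_max:
  assumes m: "0 < length xs" and i0: "i0 < length xs" "xs ! i0 = M"
    and h: "\<forall>i<length xs. xs ! i = M \<longrightarrow> xs ! cyc_next (length xs) i = M"
  shows "\<forall>j<length xs. xs ! j = M"
proof -
  have t: "xs ! ((i0 + t) mod length xs) = M" for t
  proof (induction t)
    case 0 then show ?case using i0 by simp
  next
    case (Suc t)
    have "(i0 + Suc t) mod length xs = cyc_next (length xs) ((i0 + t) mod length xs)"
      by (simp add: cyc_next_def mod_Suc_eq)
    then show ?case using h Suc m by simp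
  qed
  show ?thesis
  proof (intro allI impI)
    fix j assume j: "j < length xs"
    have "(i0 + (j + length xs - i0)) mod length xs = j" using i0 j by simp
    then show "xs ! j = M" using t[of "j + length xs - i0"] by simp
  qed
qed

lemma reach_ones:
  assumes "valid_l xs"
  shows "\<exists>ys. smooth_step\<^sup>*\<^sup>* xs ys \<and> (\<forall>y\<in>set ys. y = 1)"
  using assms
proof (induction "length xs" arbitrary: xs rule: less_induct)
  case less
  note v = less.prems
  show ?case
  proof (cases "\<forall>y\<in>set xs. y = 1")
    case True then show ?thesis by blast
  next
    case False
    then obtain x where x: "x \<in> set xs" "x \<noteq> 1" by blast
    define m where "m = length xs"
    have vv: "\<forall>i<m. 0 < xs ! i \<and> xs ! i dvd xs ! cyc_prev m i + xs ! cyc_next m i"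
      and g: "Gcd (set xs) = 1" using v by (simp_all add: valid_l_def m_def)
    have posx: "\<forall>y\<in>set xs. 0 < y" using vv by (auto simp: in_set_conv_nth m_def)
    have m2: "2 \<le> m"
    proof (rule ccontr)
      assume "\<not> 2 \<le> m"
      moreover have "m \<noteq> 0" using x by (auto simp: m_def)
      ultimately have "m = 1" by simp
      then obtain a where "xs = [a]" unfolding m_def by (cases xs) auto
      then show False using g x by simp
    qed
    define M where "M = Max (set xs)"
    have Min: "M \<in> set xs" unfolding M_def by (rule Max_in) (use x in auto)
    have Mge: "\<And>y. y \<in> set xs \<Longrightarrow> y \<le> M" by (simp add: M_def)
    have "0 < x" using posx x(1) by blast
    then have "1 < x" using x(2) by linarith
    then have M1: "1 < M" using Mge[OF x(1)] by linarith
    have "\<exists>i<m. xs ! i = M \<and> xs ! cyc_next m i \<noteq> M"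
    proof (rule ccontr)
      assume "\<not> ?thesis"
      then have h: "\<forall>i<length xs. xs ! i = M \<longrightarrow> xs ! cyc_next (length xs) i = M" by (simp add: m_def)
      obtain i0 where i0: "i0 < length xs" "xs ! i0 = M" using Min by (auto simp: in_set_conv_nth)
      have lp: "0 < length xs" using m2 unfolding m_def by linarith
      have all: "\<forall>j<length xs. xs ! j = M" by (rule all_max[OF lp i0 h])
      have sub: "\<forall>y\<in>set xs. y = M"
      proof
        fix y assume "y \<in> set xs"
        then obtain j where "j < length xs" "xs ! j = y" by (auto simp: in_set_conv_nth)
        then show "y = M" using all by auto
      qed
      then have "set xs = {M}" using Min by blast
      then show False using g M1 by simp
    qed
    then obtain i where i: "i < m" "xs ! i = M" "xs ! cyc_next m i \<noteq> M" by blast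
    define a where "a = xs ! cyc_prev m i"
    define b where "b = xs ! cyc_next m i"
    have mp: "0 < m" using m2 by linarith
    have ain: "a \<in> set xs" "b \<in> set xs" unfolding a_def b_def
      by (rule nth_mem, use cyc_prev_lt[OF mp] cyc_next_lt[OF mp] in \<open>simp add: m_def\<close>)+
    have "b < M" using Mge[OF ain(2)] i(3) b_def by simp
    moreover have "a \<le> M" using Mge[OF ain(1)] .
    moreover have "0 < a" using posx ain by simp
    moreover have "M dvd a + b" using vv i(1) unfolding a_def b_def i(2)[symmetric] by blast
    ultimately have ab: "a + b = M"
    proof -
      assume lt: "b < M" "a \<le> M" "0 < a" "M dvd a + b"
      then obtain q where q: "a + b = M * q" by (auto elim: dvdE)
      have "q \<noteq> 0"
      proof
        assume "q = 0" then have "a + b = 0" using q by simp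
        then show False using lt(3) by simp
      qed
      moreover have "M * q < M * 2" using q lt by linarith
      then have "q < 2" using mult_less_cancel1 by blast
      ultimately have "q = 1" by simp
      then show ?thesis using q by simp
    qed
    define ys where "ys = take i xs @ drop (Suc i) xs"
    have st: "smooth_step xs ys"
      unfolding smooth_step_def using m2 i ab by (auto simp: m_def[symmetric] a_def b_def ys_def)
    have vy: "valid_l ys" by (rule step_valid[OF st v])
    have "length ys < length xs" using i by (simp add: ys_def m_def)
    then obtain zs where "smooth_step\<^sup>*\<^sup>* ys zs" "\<forall>y\<in>set zs. y = 1" using less.hyps vy by blast
    then show ?thesis using st by (meson converse_rtranclp_into_rtranclp)
  qed
qed



lemma inv_shift: "p < (n::nat) \<Longrightarrow> j < n \<Longrightarrow> ((p + j) mod n + n - p) mod n = j"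
proof (cases "p + j < n")
  case True
  assume "p < n" "j < n"
  have "(p + j) mod n = p + j" using True by simp
  moreover have "p + j + n - p = j + n" by simp
  ultimately show ?thesis using \<open>j < n\<close> by simp
next
  case False
  assume a: "p < n" "j < n"
  have "(p + j) mod n = (p + j - n) mod n" using False le_mod_geq[of n "p + j"] by simp
  also have "p + j - n < n" using a by linarith
  then have "(p + j - n) mod n = p + j - n" by simp
  finally have "(p + j) mod n = p + j - n" .
  moreover have "p + j - n + n - p = j" using False a by simp
  ultimately show ?thesis using a by simp
qed

lemma prev_shift_suc: "0 < n \<Longrightarrow> cyc_prev n ((p + Suc j) mod n) = (p + j) mod n"
proof -
  assume n: "0 < n"
  have "cyc_prev n ((p + Suc j) mod n) = ((p + Suc j) mod n + (n - 1)) mod n"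
    using n by (simp add: cyc_prev_def)
  also have "\<dots> = (p + Suc j + (n - 1)) mod n" by (simp add: mod_add_left_eq)
  also have "p + Suc j + (n - 1) = (p + j) + n" using n by simp
  finally show ?thesis by simp
qed

lemma next_shift_suc: "cyc_next n ((p + Suc j) mod n) = (p + Suc (Suc j)) mod n"
  by (simp add: cyc_next_def mod_Suc_eq)

locale main =
  fixes n :: nat and r d :: "nat \<Rightarrow> nat" and p :: nat
  assumes n3: "3 \<le> n" and as: "arith_struct n r d" and pn: "p < n" and rp: "r p = 1"
begin

lemma npos: "0 < n" using n3 by simp
lemma rpos: "i < n \<Longrightarrow> 0 < r i" using as by (simp add: arith_struct_def)
lemma deq: "i < n \<Longrightarrow> int (d i) * int (r i) = int (r (cyc_prev n i)) + int (r (cyc_next n i))"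
  using as unfolding arith_struct_def by (metis of_nat_add of_nat_mult)

sublocale C: core n "\<lambda>j. r ((p + j) mod n)" "\<lambda>j. d ((p + j) mod n)"
proof
  show "3 \<le> n" by (rule n3)
  show "\<And>j. 0 < r ((p + j) mod n)" using rpos npos by simp
  show "\<And>j. r ((p + (j + n)) mod n) = r ((p + j) mod n)" by (simp add: add.assoc[symmetric])
  show "\<And>j. d ((p + (j + n)) mod n) = d ((p + j) mod n)" by (simp add: add.assoc[symmetric])
  show "r ((p + 0) mod n) = 1" using pn rp by simp
  fix j
  have v: "(p + Suc j) mod n < n" using npos by simp
  have "int (d ((p + Suc j) mod n)) * int (r ((p + Suc j) mod n))
      = int (r ((p + j) mod n)) + int (r ((p + Suc (Suc j)) mod n))"
    using deq[OF v] prev_shift_suc[OF npos] next_shift_suc by simp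
  then show "d ((p + Suc j) mod n) * r ((p + Suc j) mod n) = r ((p + j) mod n) + r ((p + Suc (Suc j)) mod n)"
    by (metis of_nat_add of_nat_mult of_nat_eq_iff)
qed

definition psi :: "(nat \<Rightarrow> int) \<Rightarrow> int" where
  "psi x = C.phi (\<lambda>j. x ((p + j) mod n))"

definition L :: "(nat \<Rightarrow> int) set" where
  "L = {y \<in> int_vecs n. (\<Sum>v<n. int (r v) * y v) = 0}"

lemma phi_cong: "(\<And>j. j < n \<Longrightarrow> y j = y' j) \<Longrightarrow> C.phi y = C.phi y'"
  unfolding C.phi_def by (rule sum.cong) auto

lemma sum_rel: "(\<Sum>v<n. f v) = (\<Sum>j<n. f ((p + j) mod n))"
  using sum_shift[OF npos, of f p] by simp

lemma T: "j < n \<Longrightarrow> cyc_mat_apply n d x ((p + j) mod n) =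
    cyc_mat_apply n (\<lambda>j. d ((p + j) mod n)) (\<lambda>i. x ((p + i) mod n)) j"
  using npos by (simp add: cyc_mat_apply_def shift_prev shift_next)

lemma psi_diff: "psi (\<lambda>i. a i - b i) = psi a - psi b"
  by (simp add: psi_def C.phi_def sum_subtractf right_diff_distrib)

lemma psi_mult: "psi (\<lambda>i. m * a i) = m * psi a"
  unfolding psi_def C.phi_def by (simp add: sum_distrib_left algebra_simps)

lemma image_zero: "(\<Sum>v<n. int (r v) * cyc_mat_apply n d z v) = 0"
  by (rule weighted_zero[OF npos]) (use deq in simp)

lemma image_kill: "C.k dvd psi (cyc_mat_apply n d z)"
proof -
  have "psi (cyc_mat_apply n d z) = C.phi (cyc_mat_apply n (\<lambda>j. d ((p + j) mod n)) (\<lambda>i. z ((p + i) mod n)))"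
    unfolding psi_def by (rule phi_cong) (simp add: T)
  then show ?thesis using C.kill by simp
qed

lemma lift: "j < n \<Longrightarrow> (\<lambda>v. if v < n then X ((v + n - p) mod n) else 0) ((p + j) mod n) = X j"
  using npos pn inv_shift[OF pn] by simp

lemma in_image:
  assumes y: "y \<in> L" and kd: "C.k dvd psi y"
  shows "y \<in> cyc_image n d"
proof -
  define y' where "y' = (\<lambda>j. y ((p + j) mod n))"
  have "(\<Sum>j<n. int (r ((p + j) mod n)) * y' j) = (\<Sum>v<n. int (r v) * y v)"
    using sum_rel[of "\<lambda>v. int (r v) * y v"] by (simp add: y'_def)
  then have s0: "(\<Sum>j<n. int (r ((p + j) mod n)) * y' j) = 0" using y by (simp add: L_def)
  have "C.k dvd C.phi y'" using kd by (simp add: psi_def y'_def)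
  from C.solve[OF s0 this] obtain X where X: "X \<in> int_vecs n"
    "\<forall>j<n. cyc_mat_apply n (\<lambda>j. d ((p + j) mod n)) X j = y' j" by blast
  define x where "x v = (if v < n then X ((v + n - p) mod n) else 0)" for v
  have xin: "x \<in> int_vecs n" by (simp add: int_vecs_def x_def)
  have xs: "j < n \<Longrightarrow> x ((p + j) mod n) = X j" for j using lift[of j X] by (simp add: x_def)
  have "cyc_mat_apply n d x v = y v" for v
  proof (cases "v < n")
    case True
    define j where "j = (v + n - p mod n) mod n"
    have j: "j < n" "(p + j) mod n = v" using shift_surj[OF npos True, of p] npos by (simp_all add: j_def)
    have "cyc_mat_apply n d x v = cyc_mat_apply n (\<lambda>j. d ((p + j) mod n)) (\<lambda>i. x ((p + i) mod n)) j"
      using T[OF j(1), of x] j(2) by simp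
    also have "\<dots> = cyc_mat_apply n (\<lambda>j. d ((p + j) mod n)) X j"
      using j(1) npos by (simp add: cyc_mat_apply_def xs cyc_prev_lt cyc_next_lt)
    also have "\<dots> = y v" using X(2) j by (simp add: y'_def)
    finally show ?thesis .
  next
    case False
    then show ?thesis using y by (simp add: cyc_mat_apply_def L_def int_vecs_def)
  qed
  then have "cyc_mat_apply n d x = y" by auto
  then show ?thesis using xin by (auto simp: cyc_image_def)
qed

lemma torsion_L: "torsion_reps n d = L"
proof
  show "torsion_reps n d \<subseteq> L"
  proof
    fix y assume "y \<in> torsion_reps n d"
    then obtain m z where y: "y \<in> int_vecs n" "0 < m" "z \<in> int_vecs n" "(\<lambda>i. m * y i) = cyc_mat_apply n d z"
      by (auto simp: torsion_reps_def cyc_image_def)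
    have "(\<Sum>v<n. int (r v) * (m * y v)) = 0" using image_zero[of z] y(4) by (metis)
    then have "m * (\<Sum>v<n. int (r v) * y v) = 0" by (simp add: sum_distrib_left algebra_simps)
    then show "y \<in> L" using y by (simp add: L_def)
  qed
  show "L \<subseteq> torsion_reps n d"
  proof
    fix y assume y: "y \<in> L"
    have "(\<Sum>v<n. int (r v) * (C.k * y v)) = C.k * (\<Sum>v<n. int (r v) * y v)"
      by (simp add: sum_distrib_left algebra_simps)
    then have "(\<lambda>i. C.k * y i) \<in> L" using y
      by (simp add: L_def int_vecs_def)
    moreover have "C.k dvd psi (\<lambda>i. C.k * y i)" by (simp add: psi_mult)
    ultimately have "(\<lambda>i. C.k * y i) \<in> cyc_image n d" by (rule in_image)
    then show "y \<in> torsion_reps n d" using y C.k_pos by (auto simp: torsion_reps_def L_def)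
  qed
qed

lemma rel_iff:
  assumes "x \<in> L" "y \<in> L"
  shows "(\<lambda>i. x i - y i) \<in> cyc_image n d \<longleftrightarrow> psi x mod C.k = psi y mod C.k"
proof
  assume "(\<lambda>i. x i - y i) \<in> cyc_image n d"
  then obtain z where "(\<lambda>i. x i - y i) = cyc_mat_apply n d z" by (auto simp: cyc_image_def)
  then have "C.k dvd psi x - psi y" using image_kill[of z] psi_diff[of x y] by metis
  then show "psi x mod C.k = psi y mod C.k" by (simp add: mod_eq_dvd_iff)
next
  assume "psi x mod C.k = psi y mod C.k"
  then have "C.k dvd psi (\<lambda>i. x i - y i)" by (simp add: mod_eq_dvd_iff psi_diff)
  moreover have "(\<lambda>i. x i - y i) \<in> L" using assms
    by (simp add: L_def int_vecs_def sum_subtractf right_diff_distrib)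
  ultimately show "(\<lambda>i. x i - y i) \<in> cyc_image n d" using in_image by blast
qed

definition eabs :: "nat \<Rightarrow> int" where
  "eabs v = (if v < n then C.e1 ((v + n - p) mod n) else 0)"

lemma eabs_L: "eabs \<in> L"
proof -
  have "(\<Sum>v<n. int (r v) * eabs v) = (\<Sum>j<n. int (r ((p + j) mod n)) * C.e1 j)"
    using sum_rel[of "\<lambda>v. int (r v) * eabs v"] lift[of _ C.e1]
    by (simp add: eabs_def[abs_def])
  also have "\<dots> = 0" by (rule C.e1_sum)
  finally show ?thesis by (simp add: L_def int_vecs_def eabs_def)
qed

lemma eabs_psi: "psi eabs = 1"
proof -
  have "psi eabs = C.phi C.e1"
    unfolding psi_def by (rule phi_cong) (use lift[of _ C.e1] in \<open>simp add: eabs_def[abs_def]\<close>)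
  then show ?thesis using C.e1_phi by simp
qed

definition cls :: "int \<Rightarrow> (nat \<Rightarrow> int) set" where
  "cls a = {y \<in> L. psi y mod C.k = a}"

lemma card_cg: "card (critical_group n d) = nat C.k"
proof -
  define R where "R = {(x, y). x \<in> torsion_reps n d \<and> y \<in> torsion_reps n d \<and> (\<lambda>i. x i - y i) \<in> cyc_image n d}"
  have cg: "critical_group n d = L // R" by (simp add: critical_group_def R_def torsion_L)
  have im: "\<And>x. x \<in> L \<Longrightarrow> R `` {x} = cls (psi x mod C.k)"
    using rel_iff by (auto simp: R_def torsion_L cls_def)
  have mem: "(\<lambda>i. a * eabs i) \<in> cls a" if "a \<in> {0..<C.k}" for a
  proof -
    have "(\<Sum>v<n. int (r v) * (a * eabs v)) = a * (\<Sum>v<n. int (r v) * eabs v)"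
      by (simp add: sum_distrib_left algebra_simps)
    then have "(\<lambda>i. a * eabs i) \<in> L" using eabs_L by (simp add: L_def int_vecs_def)
    moreover have "psi (\<lambda>i. a * eabs i) mod C.k = a" using that by (simp add: psi_mult eabs_psi)
    ultimately show ?thesis by (simp add: cls_def)
  qed
  have eq: "L // R = cls ` {0..<C.k}"
  proof
    show "L // R \<subseteq> cls ` {0..<C.k}"
      using im C.k_pos by (auto simp: quotient_def)
    show "cls ` {0..<C.k} \<subseteq> L // R"
    proof
      fix A assume "A \<in> cls ` {0..<C.k}"
      then obtain a where a: "a \<in> {0..<C.k}" "A = cls a" by blast
      have "(\<lambda>i. a * eabs i) \<in> L" using mem[OF a(1)] by (simp add: cls_def)
      moreover have "R `` {(\<lambda>i. a * eabs i)} = A"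
        using im[OF calculation] mem[OF a(1)] a(2) by (simp add: cls_def)
      ultimately show "A \<in> L // R" by (auto simp: quotient_def)
    qed
  qed
  have inj: "inj_on cls {0..<C.k}"
  proof
    fix a b assume ab: "a \<in> {0..<C.k}" "b \<in> {0..<C.k}" "cls a = cls b"
    then have "(\<lambda>i. a * eabs i) \<in> cls b" using mem[OF ab(1)] by simp
    then show "a = b" using mem[OF ab(1)] by (simp add: cls_def)
  qed
  have "card (critical_group n d) = card {0..<C.k}" using cg eq card_image[OF inj] by simp
  then show ?thesis by simp
qed

lemma k_real_abs: "real_of_int C.k = (\<Sum>i<n. 1 / (real (r i) * real (r (cyc_next n i))))"
proof -
  have "real_of_int C.k = (\<Sum>i<n. 1 / (real (r ((p + i) mod n)) * real (r ((p + cyc_next n i) mod n))))"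
    by (rule C.k_real)
  also have "\<dots> = (\<Sum>i<n. 1 / (real (r ((p + i) mod n)) * real (r (cyc_next n ((p + i) mod n)))))"
    using shift_next[OF npos] by simp
  also have "\<dots> = (\<Sum>i<n. 1 / (real (r i) * real (r (cyc_next n i))))"
    using sum_rel[of "\<lambda>i. 1 / (real (r i) * real (r (cyc_next n i)))"] by simp
  finally show ?thesis .
qed

end


lemma Sl_ones: "\<forall>y\<in>set ys. y = 1 \<Longrightarrow> Sl ys = real (length ys)"
proof -
  assume a: "\<forall>y\<in>set ys. y = 1"
  have "Sl ys = (\<Sum>i<length ys. 1)"
    unfolding Sl_def
  proof (rule sum.cong)
    fix i assume "i \<in> {..<length ys}"
    then have i: "i < length ys" by simp
    then have l: "0 < length ys" by linarith
    have "ys ! i = 1" using a i by simp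
    moreover have "ys ! cyc_next (length ys) i = 1" using a cyc_next_lt[OF l, of i] by simp
    ultimately show "1 / (real (ys ! i) * real (ys ! cyc_next (length ys) i)) = 1" by simp
  qed simp
  then show ?thesis by simp
qed

theorem mainTheorem14:
  fixes n :: nat and r d :: "nat \<Rightarrow> nat"
  assumes "3 \<le> n"
    and "arith_struct n r d"
  shows "real (card (critical_group n d)) =
           (\<Sum>i<n. 1 / (real (r i) * real (r (cyc_next n i))))
       \<and> 0 < card (critical_group n d) \<and> card (critical_group n d) \<le> n
       \<and> smooth_step\<^sup>*\<^sup>* (map r [0..<n]) (replicate (card (critical_group n d)) 1)
       \<and> (\<forall>ys. smooth_step\<^sup>*\<^sup>* (map r [0..<n]) ys \<and> (\<forall>y\<in>set ys. y = 1)
              \<longrightarrow> length ys = card (critical_group n d))"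
proof -
  have np: "0 < n" using assms(1) by simp
  have rpos: "\<And>i. i < n \<Longrightarrow> 0 < r i" and g: "Gcd (r ` {..<n}) = 1"
    and deq: "\<And>i. i < n \<Longrightarrow> d i * r i = r (cyc_prev n i) + r (cyc_next n i)"
    using assms(2) by (auto simp: arith_struct_def)
  define xs0 where "xs0 = map r [0..<n]"
  have len: "length xs0 = n" by (simp add: xs0_def)
  have nth: "\<And>i. i < n \<Longrightarrow> xs0 ! i = r i" by (simp add: xs0_def)
  have set0: "set xs0 = r ` {..<n}" by (simp add: xs0_def atLeast0LessThan)
  have v0: "valid_l xs0"
    unfolding valid_l_def len
  proof (intro conjI allI impI)
    fix i assume i: "i < n"
    show "0 < xs0 ! i" using rpos[OF i] nth[OF i] by simp
    have "r i dvd d i * r i" by simp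
    then show "xs0 ! i dvd xs0 ! cyc_prev n i + xs0 ! cyc_next n i"
      using nth[OF i] nth[OF cyc_prev_lt[OF np]] nth[OF cyc_next_lt[OF np]] deq[OF i] by simp
  next
    show "Gcd (set xs0) = 1" using g set0 by simp
  qed
  have S0: "Sl xs0 = (\<Sum>i<n. 1 / (real (r i) * real (r (cyc_next n i))))"
    unfolding Sl_def len by (rule sum.cong) (simp_all add: nth cyc_next_lt[OF np])
  have pos0: "\<forall>x\<in>set xs0. 0 < x" using set0 rpos by auto
  obtain ys0 where ys0: "smooth_step\<^sup>*\<^sup>* xs0 ys0" "\<forall>y\<in>set ys0. y = 1"
    using reach_ones[OF v0] by blast
  have sp: "Sl ys0 = Sl xs0 \<and> set ys0 \<subseteq> set xs0 \<and> (1 \<le> length xs0 \<longrightarrow> 1 \<le> length ys0)"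
    by (rule star_props[OF ys0(1) pos0])
  then have "ys0 \<noteq> []" using len np by auto
  then have "hd ys0 \<in> set ys0" by simp
  then have "1 \<in> set ys0" using ys0(2) by metis
  then have "1 \<in> r ` {..<n}" using sp set0 by auto
  then obtain p where p: "p < n" "r p = 1" by auto
  interpret M: main n r d p
    by unfold_locales (use assms p in auto)
  have card: "card (critical_group n d) = nat M.C.k" by (rule M.card_cg)
  have kpos: "0 < M.C.k" by (rule M.C.k_pos)
  have kre: "real_of_int M.C.k = (\<Sum>i<n. 1 / (real (r i) * real (r (cyc_next n i))))"
    by (rule M.k_real_abs)
  have len_all: "length ys = nat M.C.k" if "smooth_step\<^sup>*\<^sup>* xs0 ys" "\<forall>y\<in>set ys. y = 1" for ys
  proof -
    have "Sl ys = Sl xs0" using star_props[OF that(1) pos0] by simp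
    then have "real (length ys) = real_of_int M.C.k" using Sl_ones[OF that(2)] S0 kre by simp
    then show ?thesis by linarith
  qed
  have c1: "real (card (critical_group n d)) = (\<Sum>i<n. 1 / (real (r i) * real (r (cyc_next n i))))"
    using card kpos kre by simp
  have c2: "0 < card (critical_group n d)" using card kpos by simp
  have c3: "card (critical_group n d) \<le> n" using card M.C.k_le by simp
  have "replicate (length ys0) 1 = ys0" using ys0(2) by (rule replicate_length_same)
  then have c4: "smooth_step\<^sup>*\<^sup>* (map r [0..<n]) (replicate (card (critical_group n d)) 1)"
    using ys0(1) len_all[OF ys0] card by (simp add: xs0_def)
  have c5: "\<forall>ys. smooth_step\<^sup>*\<^sup>* (map r [0..<n]) ys \<and> (\<forall>y\<in>set ys. y = 1)
              \<longrightarrow> length ys = card (critical_group n d)"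
    using len_all card by (simp add: xs0_def)
  show ?thesis using c1 c2 c3 c4 c5 by blast
qed



end
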